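(* Let $\varepsilon>0$, $\kappa\ge \frac14$, $\kappa_0=\frac18$, $\kappa^*=\kappa-\kappa_0$. For any two real periodic grid functions $v,w$ on the $N\times N$ grid with equal means ($h^2\sum_{i,j}v_{i,j}=h^2\sum_{i,j}w_{i,j}$), $$E_N(v)-E_N(w)\le \langle L_N v+f_N(w),\,v-w\rangle-\frac{\varepsilon^2}{2}\|\Delta_N(v-w)\|_2^2-\kappa^*\|\nabla_N(v-w)\|_2^2.$$
   Context: Setting: $\Omega=(0,1)^2$, $N=2K+1$, $h=1/N$, grid $x_i=ih$, $y_j=jh$; periodic grid functions have discrete Fourier expansions $f_{i,j}=\sum_{k,\ell=-K}^{K}\hat f_{k,\ell}\exp(2\pi\mathrm{i}(kx_i+\ell y_j))$. Spectral operators: $\mathcal D_{Nx}$, $\mathcal D_{Ny}$ multiply $\hat f_{k,\ell}$ by $2\pi\mathrm{i}k$, $2\pi\mathrm{i}\ell$; $\nabla_N f=(\mathcal D_{Nx}f,\mathcal D_{Ny}f)$, $\nabla_N\cdot(f_1,f_2)=\mathcal D_{Nx}f_1+\mathcal D_{Ny}f_2$, $\Delta_N=\mathcal D_{Nx}^2+\mathcal D_{Ny}^2$. Inner product $\langle f,g\rangle=h^2\sum_{i,j=0}^{N-1}f_{i,j}g_{i,j}$, $\|f\|_2=\langle f,f\rangle^{1/2}$. $L_N=\varepsilon^2\Delta_N^2-\kappa\Delta_N$. Pointwise nonlinearity $f_N(u)=\nabla_N\cdot\Big(\frac{\nabla_N u}{1+|\nabla_N u|^2}\Big)+\kappa\Delta_N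 u$, where the quotient is computed pointwise on the grid. Discrete energy: $E_N(\phi)=h^2\sum_{i,j=0}^{N-1}\big(-\frac12\ln(1+|\nabla_N\phi|^2)_{i,j}\big)+\frac{\varepsilon^2}{2}\|\Delta_N\phi\|_2^2$. *)

theory Defs
  imports Complex_Main
begin

text \<open>Periodic grid functions on the N x N grid, N = 2K+1, are represented as
  functions nat => nat => real; only the values at indices i,j < N are used.\<close>

type_synonym gridfun = "nat \<Rightarrow> nat \<Rightarrow> real"

definition gridN :: "nat \<Rightarrow> nat" where
  "gridN K = 2 * K + 1"

definition hstep :: "nat \<Rightarrow> real" where
  "hstep K = 1 / real (gridN K)"

text \<open>Discrete Fourier coefficients hat f_{k,l}, k,l in {-K..K}, such that
  f_{i,j} = sum_{k,l} hat f_{k,l} exp(2 pi i (k x_i + l y_j)), x_i = i h.\<close>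
definition fcoef :: "nat \<Rightarrow> gridfun \<Rightarrow> int \<Rightarrow> int \<Rightarrow> complex" where
  "fcoef K f k l =
     (1 / of_nat (gridN K ^ 2)) *
     (\<Sum>i<gridN K. \<Sum>j<gridN K.
        complex_of_real (f i j) *
        cis (- 2 * pi * (real_of_int k * (real i * hstep K) + real_of_int l * (real j * hstep K))))"

text \<open>Spectral (Fourier multiplier) operator with symbol m; applied to real grid
  functions with odd-symmetric/even-symmetric symbols as below the result is real,
  so taking the real part is exact.\<close>
definition spec_op :: "nat \<Rightarrow> (int \<Rightarrow> int \<Rightarrow> complex) \<Rightarrow> gridfun \<Rightarrow> gridfun" where
  "spec_op K m f i j =
     Re (\<Sum>k\<in>{- int K..int K}. \<Sum>l\<in>{- int K..int K}.
           m k l * fcoef K f k l *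
           cis (2 * pi * (real_of_int k * (real i * hstep K) + real_of_int l * (real j * hstep K))))"

definition DNx :: "nat \<Rightarrow> gridfun \<Rightarrow> gridfun" where
  "DNx K = spec_op K (\<lambda>k l. 2 * complex_of_real pi * \<i> * of_int k)"

definition DNy :: "nat \<Rightarrow> gridfun \<Rightarrow> gridfun" where
  "DNy K = spec_op K (\<lambda>k l. 2 * complex_of_real pi * \<i> * of_int l)"

definition divN :: "nat \<Rightarrow> gridfun \<Rightarrow> gridfun \<Rightarrow> gridfun" where
  "divN K f1 f2 = (\<lambda>i j. DNx K f1 i j + DNy K f2 i j)"

definition lapN :: "nat \<Rightarrow> gridfun \<Rightarrow> gridfun" where
  "lapN K f = (\<lambda>i j. DNx K (DNx K f) i j + DNy K (DNy K f) i j)"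

definition ginner :: "nat \<Rightarrow> gridfun \<Rightarrow> gridfun \<Rightarrow> real" where
  "ginner K f g = hstep K ^ 2 * (\<Sum>i<gridN K. \<Sum>j<gridN K. f i j * g i j)"

definition gnorm :: "nat \<Rightarrow> gridfun \<Rightarrow> real" where
  "gnorm K f = sqrt (ginner K f f)"

definition gradnorm :: "nat \<Rightarrow> gridfun \<Rightarrow> real" where
  "gradnorm K f = sqrt (gnorm K (DNx K f) ^ 2 + gnorm K (DNy K f) ^ 2)"

definition gradsq :: "nat \<Rightarrow> gridfun \<Rightarrow> gridfun" where
  "gradsq K f = (\<lambda>i j. (DNx K f i j)\<^sup>2 + (DNy K f i j)\<^sup>2)"

definition LN :: "nat \<Rightarrow> real \<Rightarrow> real \<Rightarrow> gridfun \<Rightarrow> gridfun" where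
  "LN K \<epsilon> \<kappa> f = (\<lambda>i j. \<epsilon>\<^sup>2 * lapN K (lapN K f) i j - \<kappa> * lapN K f i j)"

definition fN :: "nat \<Rightarrow> real \<Rightarrow> gridfun \<Rightarrow> gridfun" where
  "fN K \<kappa> u = (\<lambda>i j.
     divN K (\<lambda>a b. DNx K u a b / (1 + gradsq K u a b))
            (\<lambda>a b. DNy K u a b / (1 + gradsq K u a b)) i j
     + \<kappa> * lapN K u i j)"

definition EN :: "nat \<Rightarrow> real \<Rightarrow> gridfun \<Rightarrow> real" where
  "EN K \<epsilon> \<phi> =
     hstep K ^ 2 * (\<Sum>i<gridN K. \<Sum>j<gridN K. - (1/2) * ln (1 + gradsq K \<phi> i j))
     + \<epsilon>\<^sup>2 / 2 * gnorm K (lapN K \<phi>) ^ 2"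

end

theory Submission
  imports Defs
begin

lemma key1d:
  fixes r s :: real
  shows "ln (1+s\<^sup>2) - ln (1+r\<^sup>2) \<le> 1 - (1+r\<^sup>2)/(1+s\<^sup>2) + (r-s)\<^sup>2*(1/(1+s\<^sup>2)+1/4)"
proof -
  define d where "d = 1/(1+s\<^sup>2)"
  define c where "c = d+1/4"
  define \<phi> where "\<phi> x = (x-s)\<^sup>2*c - ln(1+s\<^sup>2) + ln(1+x\<^sup>2) + 1 - (1+x\<^sup>2)*d" for x
  define \<phi>' where "\<phi>' x = 2*(x-s)*c + 2*x/(1+x\<^sup>2) - 2*x*d" for x
  have pos: "1 + y\<^sup>2 > 0" for y :: real by (simp add: add_pos_nonneg)
  have D: "DERIV \<phi> x :> \<phi>' x" for x
  proof -
    have a: "1+x\<^sup>2 \<noteq> 0" "1+s\<^sup>2 \<noteq> 0" using pos[of x] pos[of s] by auto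
    show ?thesis unfolding \<phi>_def \<phi>'_def
      using pos[of x] a by (auto intro!: derivative_eq_intros simp: power2_eq_square)
  qed
  have sgn: "\<phi>' x * (4*(1+x\<^sup>2)*(1+s\<^sup>2)) = 2*(x-s)*((x*s-2)\<^sup>2+x\<^sup>2+s\<^sup>2+1)" for x
  proof -
    have a: "1+x\<^sup>2 \<noteq> 0" "1+s\<^sup>2 \<noteq> 0" using pos[of x] pos[of s] by auto
    have e1: "\<phi>' x = (x-s)/2 + 2*x/(1+x\<^sup>2) - 2*s*d"
      unfolding \<phi>'_def c_def by (simp add: field_simps)
    have e2: "((x-s)/2 + 2*x/(1+x\<^sup>2) - 2*s*d) * (4*(1+x\<^sup>2)*(1+s\<^sup>2))
       = 2*(x-s)*(1+x\<^sup>2)*(1+s\<^sup>2) + 8*x*(1+s\<^sup>2) - 8*s*(1+x\<^sup>2)"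
    proof -
      have g: "X \<noteq> 0 \<Longrightarrow> Y \<noteq> 0 \<Longrightarrow> (a/2 + b/X - c*(1/Y))*(4*X*Y) = 2*a*X*Y + 4*b*Y - 4*c*X"
        for a b c X Y :: real by (simp add: field_simps)
      show ?thesis unfolding d_def using g[OF a, of "x-s" "2*x" "2*s"] by (simp add: algebra_simps)
    qed
    show ?thesis unfolding e1 e2 by (simp add: algebra_simps power2_eq_square)
  qed
  have Q: "(x*s-2)\<^sup>2+x\<^sup>2+s\<^sup>2+1 > 0" for x :: real by (simp add: add_nonneg_pos add_pos_nonneg)
  have P: "4*(1+x\<^sup>2)*(1+s\<^sup>2) > 0" for x :: real using pos[of x] pos[of s] by simp
  have ge: "\<phi>' x \<ge> 0" if "x \<ge> s" for x
  proof -
    have "\<phi>' x * (4*(1+x\<^sup>2)*(1+s\<^sup>2)) \<ge> 0" unfolding sgn using Q[of x] that by simp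
    show ?thesis
    proof (rule ccontr)
      assume "\<not> \<phi>' x \<ge> 0"
      then have "\<phi>' x * (4*(1+x\<^sup>2)*(1+s\<^sup>2)) < 0" using P[of x] by (intro mult_neg_pos) (auto intro: pos)
      then show False using \<open>\<phi>' x * (4*(1+x\<^sup>2)*(1+s\<^sup>2)) \<ge> 0\<close> by linarith
    qed
  qed
  have le: "\<phi>' x \<le> 0" if "x \<le> s" for x
  proof -
    have "\<phi>' x * (4*(1+x\<^sup>2)*(1+s\<^sup>2)) \<le> 0" unfolding sgn using Q[of x] that
      by (simp add: mult_nonpos_nonneg)
    show ?thesis
    proof (rule ccontr)
      assume "\<not> \<phi>' x \<le> 0"
      then have "\<phi>' x * (4*(1+x\<^sup>2)*(1+s\<^sup>2)) > 0" using P[of x] by (intro mult_pos_pos) (auto intro: pos)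
      then show False using \<open>\<phi>' x * (4*(1+x\<^sup>2)*(1+s\<^sup>2)) \<le> 0\<close> by linarith
    qed
  qed
  have "\<phi> s = 0" unfolding \<phi>_def d_def using pos[of s] by simp
  moreover have "\<phi> r \<ge> \<phi> s"
  proof (cases "r \<ge> s")
    case True
    show ?thesis by (rule DERIV_nonneg_imp_nondecreasing[OF True]) (use D ge in blast)
  next
    case False
    then have "r \<le> s" by simp
    show ?thesis by (rule DERIV_nonpos_imp_nonincreasing[OF \<open>r \<le> s\<close>]) (use D le in blast)
  qed
  ultimately have "\<phi> r \<ge> 0" by simp
  then show ?thesis unfolding \<phi>_def c_def d_def by simp
qed


lemma key2d:
  fixes a1 a2 b1 b2 :: real
  shows "-(1/2)*ln(1+(a1\<^sup>2+a2\<^sup>2)) - (-(1/2)*ln(1+(b1\<^sup>2+b2\<^sup>2)))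
     \<le> -(b1/(1+(b1\<^sup>2+b2\<^sup>2))*(a1-b1) + b2/(1+(b1\<^sup>2+b2\<^sup>2))*(a2-b2))
        + 1/8*((a1-b1)*(a1-b1)+(a2-b2)*(a2-b2))"
proof -
  define A where "A = a1\<^sup>2+a2\<^sup>2"
  define B where "B = b1\<^sup>2+b2\<^sup>2"
  define D where "D = (a1-b1)*(a1-b1)+(a2-b2)*(a2-b2)"
  define r where "r = sqrt A"
  define s where "s = sqrt B"
  have A0: "A \<ge> 0" and B0: "B \<ge> 0" unfolding A_def B_def by simp_all
  have r2: "r\<^sup>2 = A" and s2: "s\<^sup>2 = B" unfolding r_def s_def using A0 B0 by simp_all
  have cs: "(a1*b1+a2*b2)\<^sup>2 \<le> A*B"
  proof -
    have "A*B - (a1*b1+a2*b2)\<^sup>2 = (a1*b2-a2*b1)\<^sup>2" unfolding A_def B_def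
      by (simp add: power2_eq_square algebra_simps)
    then show ?thesis by (metis diff_ge_0_iff_ge zero_le_power2)
  qed
  have "a1*b1+a2*b2 \<le> sqrt (A*B)" using cs by (rule real_le_rsqrt)
  then have dot: "a1*b1+a2*b2 \<le> r*s" unfolding r_def s_def by (simp add: real_sqrt_mult)
  have rsD: "(r-s)\<^sup>2 \<le> D"
  proof -
    have e1: "(r-s)\<^sup>2 = A + B - 2*(r*s)" using r2 s2 by (simp add: power2_eq_square algebra_simps)
    have e2: "D = A + B - 2*(a1*b1+a2*b2)" unfolding D_def A_def B_def
      by (simp add: power2_eq_square algebra_simps)
    show ?thesis unfolding e1 e2 using dot by simp
  qed
  have B1: "1 + B > 0" using B0 by simp
  have k: "ln (1+B) - ln (1+A) \<le> 1 - (1+A)/(1+B) + (r-s)\<^sup>2*(1/(1+B)+1/4)"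
    using key1d[of s r] r2 s2 by simp
  have cpos: "1/(1+B)+1/4 \<ge> 0" using B1 by simp
  have k2: "ln (1+B) - ln (1+A) \<le> 1 - (1+A)/(1+B) + D*(1/(1+B)+1/4)"
    using k mult_right_mono[OF rsD cpos] by linarith
  have AB: "A = B + 2*(b1*(a1-b1)+b2*(a2-b2)) + D"
    unfolding A_def B_def D_def by (simp add: power2_eq_square algebra_simps)
  have id: "1 - (1+A)/(1+B) + D*(1/(1+B)+1/4) = -2*(b1*(a1-b1)+b2*(a2-b2))/(1+B) + D/4"
  proof -
    have g: "Y \<noteq> 0 \<Longrightarrow> 1 - (Y + 2*t + E)/Y + E*(1/Y+1/4) = -2*t/Y + E/4" for Y t E :: real
      by (simp add: field_simps)
    have h1: "1 + A = (1+B) + 2*(b1*(a1-b1)+b2*(a2-b2)) + D" using AB by simp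
    show ?thesis unfolding h1 by (rule g) (use B1 in simp)
  qed
  have id2: "-(b1/(1+B)*(a1-b1) + b2/(1+B)*(a2-b2)) = -(b1*(a1-b1)+b2*(a2-b2))/(1+B)"
  proof -
    have g: "-(p/Y*u + q/Y*w) = -(p*u+q*w)/Y" for p q u w Y :: real
      by (cases "Y=0") (simp_all add: field_simps)
    show ?thesis by (rule g)
  qed
  define T where "T = (b1*(a1-b1)+b2*(a2-b2))/(1+B)"
  have k3: "ln(1+B) - ln(1+A) \<le> -2*T + D/4" using k2 unfolding id T_def by simp
  have q: "-(b1/(1+B)*(a1-b1) + b2/(1+B)*(a2-b2)) = -T" unfolding id2 T_def by (rule minus_divide_left[symmetric])
  show ?thesis unfolding A_def[symmetric] B_def[symmetric] D_def[symmetric] q using k3 by linarith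
qed


definition ip :: "nat \<Rightarrow> gridfun \<Rightarrow> gridfun \<Rightarrow> real" where
  "ip K f g = (\<Sum>i<gridN K. \<Sum>j<gridN K. f i j * g i j)"

definition Eb :: "nat \<Rightarrow> int \<Rightarrow> int \<Rightarrow> nat \<Rightarrow> nat \<Rightarrow> complex" where
  "Eb K k l i j = cis (2 * pi * (real_of_int k * (real i * hstep K) + real_of_int l * (real j * hstep K)))"

lemma sum_cis_fcoef:
  "(\<Sum>i<gridN K. \<Sum>j<gridN K. complex_of_real (g i j) * Eb K k l i j)
     = of_nat (gridN K ^ 2) * cnj (fcoef K g k l)"
proof -
  have "gridN K ^ 2 \<noteq> 0" unfolding gridN_def by simp
  then have N0: "(of_nat (gridN K ^ 2) :: complex) \<noteq> 0" by simp
  have "cnj (fcoef K g k l) = (1 / of_nat (gridN K ^ 2)) *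
     (\<Sum>i<gridN K. \<Sum>j<gridN K. complex_of_real (g i j) * Eb K k l i j)"
    unfolding fcoef_def Eb_def by (simp add: cis_cnj)
  then show ?thesis using N0 by simp
qed

lemma Re_mult_real: "Re (z * complex_of_real r) = Re z * r"
  by simp

lemma spec_sum:
  "(\<Sum>i<gridN K. \<Sum>j<gridN K. spec_op K m f i j * g i j)
   = real (gridN K ^ 2) * Re (\<Sum>k\<in>{- int K..int K}. \<Sum>l\<in>{- int K..int K}.
        m k l * fcoef K f k l * cnj (fcoef K g k l))"
proof -
  let ?I = "{- int K..int K}"
  have pt: "spec_op K m f i j * g i j = Re (\<Sum>k\<in>?I. \<Sum>l\<in>?I.
           m k l * fcoef K f k l * (complex_of_real (g i j) * Eb K k l i j))" for i j
  proof -
    have "spec_op K m f i j * g i j = Re ((\<Sum>k\<in>?I. \<Sum>l\<in>?I. m k l * fcoef K f k l * Eb K k l i j) * complex_of_real (g i j))"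
      unfolding spec_op_def Eb_def by (simp only: Re_mult_real)
    also have "(\<Sum>k\<in>?I. \<Sum>l\<in>?I. m k l * fcoef K f k l * Eb K k l i j) * complex_of_real (g i j)
       = (\<Sum>k\<in>?I. \<Sum>l\<in>?I. m k l * fcoef K f k l * (complex_of_real (g i j) * Eb K k l i j))"
      unfolding sum_distrib_right by (intro sum.cong refl) (simp add: mult_ac)
    finally show ?thesis .
  qed
  have "(\<Sum>i<gridN K. \<Sum>j<gridN K. spec_op K m f i j * g i j)
     = Re (\<Sum>i<gridN K. \<Sum>j<gridN K. \<Sum>k\<in>?I. \<Sum>l\<in>?I.
           m k l * fcoef K f k l * (complex_of_real (g i j) * Eb K k l i j))"
    by (simp only: pt Re_sum)
  also have "(\<Sum>i<gridN K. \<Sum>j<gridN K. \<Sum>k\<in>?I. \<Sum>l\<in>?I.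
           m k l * fcoef K f k l * (complex_of_real (g i j) * Eb K k l i j))
     = (\<Sum>k\<in>?I. \<Sum>l\<in>?I. \<Sum>i<gridN K. \<Sum>j<gridN K.
           m k l * fcoef K f k l * (complex_of_real (g i j) * Eb K k l i j))"
  proof -
    have "(\<Sum>i<gridN K. \<Sum>j<gridN K. \<Sum>k\<in>?I. \<Sum>l\<in>?I.
           m k l * fcoef K f k l * (complex_of_real (g i j) * Eb K k l i j))
      = (\<Sum>i<gridN K. \<Sum>k\<in>?I. \<Sum>l\<in>?I. \<Sum>j<gridN K.
           m k l * fcoef K f k l * (complex_of_real (g i j) * Eb K k l i j))"
      by (intro sum.cong refl, subst sum.swap, subst (2) sum.swap, rule refl)
    also have "\<dots> = (\<Sum>k\<in>?I. \<Sum>l\<in>?I. \<Sum>i<gridN K. \<Sum>j<gridN K.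
           m k l * fcoef K f k l * (complex_of_real (g i j) * Eb K k l i j))"
      by (subst sum.swap, intro sum.cong refl, subst sum.swap, rule refl)
    finally show ?thesis .
  qed
  also have "\<dots> = (\<Sum>k\<in>?I. \<Sum>l\<in>?I. m k l * fcoef K f k l *
           (\<Sum>i<gridN K. \<Sum>j<gridN K. complex_of_real (g i j) * Eb K k l i j))"
    by (simp add: sum_distrib_left)
  also have "\<dots> = (\<Sum>k\<in>?I. \<Sum>l\<in>?I. of_real (real (gridN K ^ 2)) * (m k l * fcoef K f k l * cnj (fcoef K g k l)))"
    unfolding sum_cis_fcoef by (simp add: mult_ac)
  also have "\<dots> = of_real (real (gridN K ^ 2)) * (\<Sum>k\<in>?I. \<Sum>l\<in>?I. m k l * fcoef K f k l * cnj (fcoef K g k l))"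
    by (simp add: sum_distrib_left)
  finally have "(\<Sum>i<gridN K. \<Sum>j<gridN K. spec_op K m f i j * g i j) = Re (\<Sum>k\<in>?I. \<Sum>l\<in>?I. m k l * fcoef K f k l * cnj (fcoef K g k l)) * real (gridN K ^ 2)"
    by (simp only: Re_complex_of_real mult.commute[of "complex_of_real _"] Re_mult_real)
  then show ?thesis by (simp only: mult.commute)
qed


lemma spec_skew:
  assumes m: "\<And>k l. cnj (m k l) = - m k l"
  shows "ip K (spec_op K m f) g = - ip K f (spec_op K m g)"
proof -
  let ?I = "{- int K..int K}"
  have 1: "ip K (spec_op K m f) g = real (gridN K ^ 2) * Re (\<Sum>k\<in>?I. \<Sum>l\<in>?I.
        m k l * fcoef K f k l * cnj (fcoef K g k l))"
    unfolding ip_def by (rule spec_sum)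
  have "ip K f (spec_op K m g) = (\<Sum>i<gridN K. \<Sum>j<gridN K. spec_op K m g i j * f i j)"
    unfolding ip_def by (simp add: mult.commute)
  also have "\<dots> = real (gridN K ^ 2) * Re (\<Sum>k\<in>?I. \<Sum>l\<in>?I.
        m k l * fcoef K g k l * cnj (fcoef K f k l))"
    by (rule spec_sum)
  also have "Re (\<Sum>k\<in>?I. \<Sum>l\<in>?I. m k l * fcoef K g k l * cnj (fcoef K f k l))
      = Re (cnj (\<Sum>k\<in>?I. \<Sum>l\<in>?I. m k l * fcoef K g k l * cnj (fcoef K f k l)))"
    by (simp only: cnj.sel)
  also have "cnj (\<Sum>k\<in>?I. \<Sum>l\<in>?I. m k l * fcoef K g k l * cnj (fcoef K f k l))
      = - (\<Sum>k\<in>?I. \<Sum>l\<in>?I. m k l * fcoef K f k l * cnj (fcoef K g k l))"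
    by (simp add: m sum_negf mult_ac)
  finally show ?thesis using 1 by simp
qed

lemma DNx_skew: "ip K (DNx K f) g = - ip K f (DNx K g)"
  unfolding DNx_def by (rule spec_skew) simp

lemma DNy_skew: "ip K (DNy K f) g = - ip K f (DNy K g)"
  unfolding DNy_def by (rule spec_skew) simp

lemma fcoef_diff: "fcoef K (\<lambda>i j. f i j - g i j) k l = fcoef K f k l - fcoef K g k l"
  unfolding fcoef_def by (simp add: ring_distribs sum_subtractf)

lemma spec_diff: "spec_op K m (\<lambda>i j. f i j - g i j) = (\<lambda>i j. spec_op K m f i j - spec_op K m g i j)"
  unfolding spec_op_def fcoef_diff by (intro ext) (simp add: ring_distribs sum_subtractf)

lemma DNx_diff: "DNx K (\<lambda>i j. f i j - g i j) = (\<lambda>i j. DNx K f i j - DNx K g i j)"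
  unfolding DNx_def by (rule spec_diff)

lemma DNy_diff: "DNy K (\<lambda>i j. f i j - g i j) = (\<lambda>i j. DNy K f i j - DNy K g i j)"
  unfolding DNy_def by (rule spec_diff)

lemma lapN_diff: "lapN K (\<lambda>i j. f i j - g i j) = (\<lambda>i j. lapN K f i j - lapN K g i j)"
  unfolding lapN_def DNx_diff DNy_diff by (intro ext) simp


lemma ip_add_left: "ip K (\<lambda>i j. f i j + g i j) h = ip K f h + ip K g h"
  unfolding ip_def by (simp add: ring_distribs sum.distrib)

lemma ip_add_right: "ip K h (\<lambda>i j. f i j + g i j) = ip K h f + ip K h g"
  unfolding ip_def by (simp add: ring_distribs sum.distrib)

lemma ip_diff_left: "ip K (\<lambda>i j. f i j - g i j) h = ip K f h - ip K g h"
  unfolding ip_def by (simp add: ring_distribs sum_subtractf)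

lemma ip_sq_diff: "ip K f f - ip K g g = 2 * ip K f (\<lambda>i j. f i j - g i j) - ip K (\<lambda>i j. f i j - g i j) (\<lambda>i j. f i j - g i j)"
proof -
  have "ip K f f - ip K g g = (\<Sum>i<gridN K. \<Sum>j<gridN K. f i j * f i j - g i j * g i j)"
    unfolding ip_def by (simp add: sum_subtractf)
  also have "\<dots> = (\<Sum>i<gridN K. \<Sum>j<gridN K. 2 * (f i j * (f i j - g i j)) - (f i j - g i j) * (f i j - g i j))"
    by (intro sum.cong refl) (simp add: algebra_simps)
  also have "\<dots> = 2 * ip K f (\<lambda>i j. f i j - g i j) - ip K (\<lambda>i j. f i j - g i j) (\<lambda>i j. f i j - g i j)"
    unfolding ip_def by (simp add: sum_subtractf sum_distrib_left)
  finally show ?thesis .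
qed

lemma ip_lap_sym: "ip K (lapN K X) e = ip K X (lapN K e)"
proof -
  have "ip K (lapN K X) e = ip K (DNx K (DNx K X)) e + ip K (DNy K (DNy K X)) e"
    unfolding lapN_def by (rule ip_add_left)
  also have "\<dots> = ip K X (DNx K (DNx K e)) + ip K X (DNy K (DNy K e))"
    by (simp add: DNx_skew DNy_skew)
  also have "\<dots> = ip K X (lapN K e)"
    unfolding lapN_def by (rule ip_add_right[symmetric])
  finally show ?thesis .
qed

lemma ip_lap_self: "ip K (lapN K e) e = - ip K (DNx K e) (DNx K e) - ip K (DNy K e) (DNy K e)"
proof -
  have "ip K (lapN K e) e = ip K (DNx K (DNx K e)) e + ip K (DNy K (DNy K e)) e"
    unfolding lapN_def by (rule ip_add_left)
  then show ?thesis by (simp add: DNx_skew DNy_skew)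
qed

lemma ip_nonneg: "ip K f f \<ge> 0"
  unfolding ip_def by (intro sum_nonneg) simp

theorem lemma2p6:
  fixes K :: nat and \<epsilon> \<kappa> :: real and v w :: gridfun
  assumes "\<epsilon> > 0" and "\<kappa> \<ge> 1/4"
    and "hstep K ^ 2 * (\<Sum>i<gridN K. \<Sum>j<gridN K. v i j)
         = hstep K ^ 2 * (\<Sum>i<gridN K. \<Sum>j<gridN K. w i j)"
  shows "EN K \<epsilon> v - EN K \<epsilon> w
         \<le> ginner K (\<lambda>i j. LN K \<epsilon> \<kappa> v i j + fN K \<kappa> w i j) (\<lambda>i j. v i j - w i j)
           - \<epsilon>\<^sup>2 / 2 * gnorm K (lapN K (\<lambda>i j. v i j - w i j)) ^ 2
           - (\<kappa> - 1/8) * gradnorm K (\<lambda>i j. v i j - w i j) ^ 2"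
proof -
  define e where "e = (\<lambda>i j. v i j - w i j)"
  define q1 where "q1 = (\<lambda>a b. DNx K w a b / (1 + gradsq K w a b))"
  define q2 where "q2 = (\<lambda>a b. DNy K w a b / (1 + gradsq K w a b))"
  define h2 where "h2 = hstep K ^ 2"
  have h2: "h2 \<ge> 0" unfolding h2_def by simp
  have Dxe: "DNx K e = (\<lambda>i j. DNx K v i j - DNx K w i j)" unfolding e_def by (rule DNx_diff)
  have Dye: "DNy K e = (\<lambda>i j. DNy K v i j - DNy K w i j)" unfolding e_def by (rule DNy_diff)
  have Le: "lapN K e = (\<lambda>i j. lapN K v i j - lapN K w i j)" unfolding e_def by (rule lapN_diff)
  have gi: "ginner K f g = h2 * ip K f g" for f g unfolding ginner_def ip_def h2_def ..
  have gn: "gnorm K f ^ 2 = h2 * ip K f f" for f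
    unfolding gnorm_def gi using h2 ip_nonneg[of K f] by simp
  have gr: "gradnorm K f ^ 2 = h2 * ip K (DNx K f) (DNx K f) + h2 * ip K (DNy K f) (DNy K f)" for f
    unfolding gradnorm_def gn using h2 ip_nonneg[of K "DNx K f"] ip_nonneg[of K "DNy K f"] by simp
  have ipLN: "ip K (\<lambda>i j. LN K \<epsilon> \<kappa> v i j + fN K \<kappa> w i j) e
     = \<epsilon>\<^sup>2 * ip K (lapN K (lapN K v)) e - \<kappa> * ip K (lapN K v) e + ip K (DNx K q1) e
       + ip K (DNy K q2) e + \<kappa> * ip K (lapN K w) e"
    unfolding ip_def LN_def fN_def divN_def q1_def q2_def
    by (simp add: sum.distrib sum_subtractf sum_distrib_left algebra_simps)
  have Lv_Lw: "ip K (lapN K v) e - ip K (lapN K w) e = ip K (lapN K e) e"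
    unfolding Le ip_diff_left ..
  define Sv where "Sv = (\<Sum>i<gridN K. \<Sum>j<gridN K. - (1/2) * ln (1 + gradsq K v i j))"
  define Sw where "Sw = (\<Sum>i<gridN K. \<Sum>j<gridN K. - (1/2) * ln (1 + gradsq K w i j))"
  have lnb: "Sv - Sw \<le> - ip K q1 (DNx K e) - ip K q2 (DNy K e)
      + 1/8 * (ip K (DNx K e) (DNx K e) + ip K (DNy K e) (DNy K e))"
  proof -
    have "Sv - Sw = (\<Sum>i<gridN K. \<Sum>j<gridN K. - (1/2) * ln (1 + gradsq K v i j) - (- (1/2) * ln (1 + gradsq K w i j)))"
      unfolding Sv_def Sw_def by (simp only: sum_subtractf)
    also have "\<dots> \<le> (\<Sum>i<gridN K. \<Sum>j<gridN K. -(q1 i j * DNx K e i j + q2 i j * DNy K e i j)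
          + 1/8 * (DNx K e i j * DNx K e i j + DNy K e i j * DNy K e i j))"
      unfolding Dxe Dye q1_def q2_def gradsq_def
      by (intro sum_mono key2d)
    also have "\<dots> = - ip K q1 (DNx K e) - ip K q2 (DNy K e)
      + 1/8 * (ip K (DNx K e) (DNx K e) + ip K (DNy K e) (DNy K e))"
      unfolding ip_def by (simp add: sum.distrib sum_subtractf sum_distrib_left sum_negf sum_divide_distrib[symmetric])
    finally show ?thesis .
  qed
  have EN: "EN K \<epsilon> v - EN K \<epsilon> w = h2 * (Sv - Sw) + \<epsilon>\<^sup>2 / 2 * h2 * (ip K (lapN K v) (lapN K v) - ip K (lapN K w) (lapN K w))"
    unfolding EN_def gn Sv_def Sw_def h2_def by (simp add: algebra_simps)
  have sq: "ip K (lapN K v) (lapN K v) - ip K (lapN K w) (lapN K w) = 2 * ip K (lapN K v) (lapN K e) - ip K (lapN K e) (lapN K e)"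
    unfolding Le by (rule ip_sq_diff)
  have key: "h2 * (Sv - Sw) \<le> h2 * (- ip K q1 (DNx K e) - ip K q2 (DNy K e)
      + 1/8 * (ip K (DNx K e) (DNx K e) + ip K (DNy K e) (DNy K e)))"
    by (rule mult_left_mono[OF lnb h2])
  have Lv: "ip K (lapN K v) e = ip K (lapN K w) e - ip K (DNx K e) (DNx K e) - ip K (DNy K e) (DNy K e)"
    using Lv_Lw ip_lap_self[of K e] by simp
  have R: "ginner K (\<lambda>i j. LN K \<epsilon> \<kappa> v i j + fN K \<kappa> w i j) e = h2 * (\<epsilon>\<^sup>2 * ip K (lapN K v) (lapN K e)
      - \<kappa> * ip K (lapN K v) e - ip K q1 (DNx K e) - ip K q2 (DNy K e) + \<kappa> * ip K (lapN K w) e)"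
    unfolding gi ipLN ip_lap_sym[of K "lapN K v" e] DNx_skew[of K q1 e] DNy_skew[of K q2 e] by simp
  show ?thesis
    unfolding e_def[symmetric] R gn gr EN sq Lv
    using key by (simp add: algebra_simps)
qed

end
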